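(* Let $\theta:\mathbb{A}\to\mathbb{A}^\lambda$ be a primitive substitution (satisfying the standing assumptions) with $c(\theta)=1$. Then $h(\theta)=1$.
   Context: Substitution of constant length $\lambda\ge2$: $\theta:\mathbb{A}\to\mathbb{A}^\lambda$, $\theta(a)=\theta(a)_0\cdots\theta(a)_{\lambda-1}$, extended by concatenation, $\theta^k$ its iterates; primitive: for some $k$, every $\theta^k(a)$ contains every letter. Standing assumptions: some $a_0$ has $\theta(a_0)_0=a_0$, $\theta$ injective on letters, the subshift $X_\theta$ infinite; $u$ is the fixed point $\theta(u)=u$ with $u[0]=a_0$. For $k\ge0$, $S_k=\{r\ge1:u[k+r]=u[k]\}$ and $g_k=\gcd S_k$; height $h(\theta)=\max\{m\ge1:\gcd(m,\lambda)=1,\ m\mid g_0\}$ (it also equals $\max\{m:\gcd(m,\lambda)=1, m\mid g_k\}$ for each $k$). Column number $c(\theta)=\min_{k\ge1,\,0\le j<\lambda^k}|\{\theta^k(a)_j:a\in\mathbb{A}\}|$. *)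

theory Defs
  imports Main
begin

definition const_length :: "('a \<Rightarrow> 'a list) \<Rightarrow> nat \<Rightarrow> bool" where
  "const_length \<theta> lam \<longleftrightarrow> (\<forall>a. length (\<theta> a) = lam)"

fun subst_pow :: "('a \<Rightarrow> 'a list) \<Rightarrow> nat \<Rightarrow> 'a \<Rightarrow> 'a list" where
  "subst_pow \<theta> 0 a = [a]"
| "subst_pow \<theta> (Suc k) a = concat (map \<theta> (subst_pow \<theta> k a))"

definition primitive :: "('a \<Rightarrow> 'a list) \<Rightarrow> bool" where
  "primitive \<theta> \<longleftrightarrow> (\<exists>k\<ge>1. \<forall>a b. b \<in> set (subst_pow \<theta> k a))"

definition subst_language :: "('a \<Rightarrow> 'a list) \<Rightarrow> 'a list set" where
  "subst_language \<theta> = {w. \<exists>k a p q. subst_pow \<theta> k a = p @ w @ q}"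

definition subshift :: "('a \<Rightarrow> 'a list) \<Rightarrow> (int \<Rightarrow> 'a) set" where
  "subshift \<theta> = {x. \<forall>i::int. \<forall>n::nat. map (\<lambda>m. x (i + int m)) [0..<n] \<in> subst_language \<theta>}"

text \<open>The one-sided fixed point u = theta(u) with u[0] = a0: u[n] is the n-th letter of
  theta^(n+1)(a0) (which has length lam^(n+1) > n, and theta^k(a0) is a prefix of
  theta^(k+1)(a0) when theta(a0)_0 = a0).\<close>
definition fixpt :: "('a \<Rightarrow> 'a list) \<Rightarrow> 'a \<Rightarrow> nat \<Rightarrow> 'a" where
  "fixpt \<theta> a0 n = subst_pow \<theta> (Suc n) a0 ! n"

definition height :: "('a \<Rightarrow> 'a list) \<Rightarrow> nat \<Rightarrow> 'a \<Rightarrow> nat" where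
  "height \<theta> lam a0 =
     (let u = fixpt \<theta> a0; g0 = Gcd {r. r \<ge> 1 \<and> u r = u 0}
      in GREATEST m. m \<ge> 1 \<and> coprime m lam \<and> m dvd g0)"

definition column_number :: "('a \<Rightarrow> 'a list) \<Rightarrow> nat \<Rightarrow> nat" where
  "column_number \<theta> lam =
     Min {card ((\<lambda>a. subst_pow \<theta> k a ! j) ` UNIV) | k j. k \<ge> 1 \<and> j < lam ^ k}"

end

theory Submission
  imports Defs
begin

lemma len_pow:
  assumes "const_length \<theta> lam"
  shows "length (subst_pow \<theta> k a) = lam ^ k"
proof (induction k arbitrary: a)
  case 0 then show ?case by simp
next
  case (Suc k)
  have "length (concat (map \<theta> w)) = lam * length w" for w
    using assms by (induction w) (auto simp: const_length_def)
  then show ?case using Suc by simp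
qed

lemma pow_add:
  "subst_pow \<theta> (k + l) a = concat (map (subst_pow \<theta> l) (subst_pow \<theta> k a))"
proof (induction l)
  case 0
  have "concat (map (\<lambda>x. [x]) w) = w" for w :: "'a list" by (induction w) auto
  then show ?case by simp
next
  case (Suc l)
  have "subst_pow \<theta> (k + Suc l) a = concat (map \<theta> (subst_pow \<theta> (k + l) a))" by simp
  also have "\<dots> = concat (map (subst_pow \<theta> (Suc l)) (subst_pow \<theta> k a))"
  proof -
    have "concat (map \<theta> (concat (map (subst_pow \<theta> l) w))) = concat (map (subst_pow \<theta> (Suc l)) w)" for w
      by (induction w) auto
    then show ?thesis unfolding Suc .
  qed
  finally show ?case .
qed

lemma concat_nth_uniform:
  assumes "\<forall>x. length (f x) = L" "i < L" "n < length w"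
  shows "concat (map f w) ! (L * n + i) = f (w ! n) ! i"
  using assms(3)
proof (induction w arbitrary: n)
  case Nil then show ?case by simp
next
  case (Cons x w)
  show ?case
  proof (cases n)
    case 0 then show ?thesis using assms by (simp add: nth_append)
  next
    case (Suc n')
    have "L * n + i = L + (L * n' + i)" using Suc by simp
    then show ?thesis using Cons assms Suc by (simp add: nth_append)
  qed
qed

lemma prefix_step:
  assumes "const_length \<theta> lam" "lam \<ge> 1" "\<theta> a0 ! 0 = a0" "n < lam ^ k"
  shows "subst_pow \<theta> (Suc k) a0 ! n = subst_pow \<theta> k a0 ! n"
proof -
  have "length (\<theta> a0) = lam" using assms(1) by (simp add: const_length_def)
  then obtain rest where r: "\<theta> a0 = a0 # rest" using assms(2,3)
    by (cases "\<theta> a0") auto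
  have "subst_pow \<theta> (1 + k) a0 = concat (map (subst_pow \<theta> k) (subst_pow \<theta> 1 a0))"
    by (rule pow_add)
  also have "subst_pow \<theta> 1 a0 = \<theta> a0" by simp
  finally have "subst_pow \<theta> (Suc k) a0 = subst_pow \<theta> k a0 @ concat (map (subst_pow \<theta> k) rest)"
    using r by simp
  then show ?thesis using assms(4) len_pow[OF assms(1)] by (simp add: nth_append)
qed

lemma prefix_mono:
  assumes "const_length \<theta> lam" "lam \<ge> 1" "\<theta> a0 ! 0 = a0" "n < lam ^ k" "k \<le> m"
  shows "subst_pow \<theta> m a0 ! n = subst_pow \<theta> k a0 ! n"
  using assms(5)
proof (induction m)
  case 0 then show ?case by simp
next
  case (Suc m)
  show ?case
  proof (cases "k = Suc m")
    case True then show ?thesis by simp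
  next
    case False
    then have km: "k \<le> m" using Suc by simp
    have "lam ^ k \<le> lam ^ m" using assms(2) km by (simp add: power_increasing)
    then have "n < lam ^ m" using assms(4) by simp
    then show ?thesis using prefix_step[OF assms(1-3)] Suc km by simp
  qed
qed

lemma fixpt_any:
  assumes "const_length \<theta> lam" "lam \<ge> 2" "\<theta> a0 ! 0 = a0" "n < lam ^ m"
  shows "fixpt \<theta> a0 n = subst_pow \<theta> m a0 ! n"
proof -
  have n1: "n < lam ^ Suc n"
  proof -
    have "n < 2 ^ n" by (rule less_exp)
    also have "(2::nat) ^ n \<le> lam ^ n" using assms(2) by (rule power_mono) simp
    also have "lam ^ n \<le> lam ^ Suc n" using assms(2) by (intro power_increasing) auto
    finally show ?thesis .
  qed
  show ?thesis
  proof (cases "Suc n \<le> m")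
    case True
    have "subst_pow \<theta> m a0 ! n = subst_pow \<theta> (Suc n) a0 ! n"
      by (rule prefix_mono[OF assms(1) _ assms(3) n1 True]) (use assms(2) in simp)
    then show ?thesis unfolding fixpt_def by (rule sym)
  next
    case False
    then have "m \<le> Suc n" by simp
    have "subst_pow \<theta> (Suc n) a0 ! n = subst_pow \<theta> m a0 ! n"
      by (rule prefix_mono[OF assms(1) _ assms(3) assms(4)]) (use assms(2) \<open>m \<le> Suc n\<close> in simp_all)
    then show ?thesis unfolding fixpt_def .
  qed
qed

lemma fixpt_block:
  assumes "const_length \<theta> lam" "lam \<ge> 2" "\<theta> a0 ! 0 = a0" "i < lam ^ K"
  shows "fixpt \<theta> a0 (lam ^ K * n + i) = subst_pow \<theta> K (fixpt \<theta> a0 n) ! i"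
proof -
  have n1: "n < lam ^ Suc n"
  proof -
    have "n < 2 ^ n" by (rule less_exp)
    also have "(2::nat) ^ n \<le> lam ^ n" using assms(2) by (rule power_mono) simp
    also have "lam ^ n \<le> lam ^ Suc n" using assms(2) by (intro power_increasing) auto
    finally show ?thesis .
  qed
  have "lam ^ K * n + i < lam ^ K * Suc n" using assms(4) by simp
  also have "\<dots> \<le> lam ^ K * lam ^ Suc n" using n1 by (intro mult_le_mono2) simp
  finally have b: "lam ^ K * n + i < lam ^ (Suc n + K)" by (simp add: power_add mult_ac)
  have "fixpt \<theta> a0 (lam ^ K * n + i) = subst_pow \<theta> (Suc n + K) a0 ! (lam ^ K * n + i)"
    using fixpt_any[OF assms(1-3) b] .
  also have "\<dots> = concat (map (subst_pow \<theta> K) (subst_pow \<theta> (Suc n) a0)) ! (lam ^ K * n + i)"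
    by (simp only: pow_add)
  also have "\<dots> = subst_pow \<theta> K (subst_pow \<theta> (Suc n) a0 ! n) ! i"
    by (rule concat_nth_uniform) (use assms len_pow[OF assms(1)] n1 in \<open>simp_all del: subst_pow.simps\<close>)
  finally show ?thesis by (simp add: fixpt_def)
qed

theorem mainTheorem5:
  fixes \<theta> :: "'a::finite \<Rightarrow> 'a list" and lam :: nat and a0 :: 'a
  assumes "lam \<ge> 2"
    and "const_length \<theta> lam"
    and "primitive \<theta>"
    and "\<theta> a0 ! 0 = a0"
    and "inj \<theta>"
    and "infinite (subshift \<theta>)"
    and "column_number \<theta> lam = 1"
  shows "height \<theta> lam a0 = 1"
proof -
  let ?S = "{card ((\<lambda>a. subst_pow \<theta> k a ! j) ` UNIV) | k j. k \<ge> 1 \<and> j < lam ^ k}"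
  have fin: "finite ?S"
  proof (rule finite_subset)
    show "?S \<subseteq> {0..card (UNIV::'a set)}" by (auto intro!: card_mono finite_UNIV)
  qed simp
  have ne: "?S \<noteq> {}"
  proof -
    have "card ((\<lambda>a. subst_pow \<theta> 1 a ! 0) ` UNIV) \<in> ?S" using assms(1) by force
    then show ?thesis by blast
  qed
  have "1 \<in> ?S" using Min_in[OF fin ne] assms(7) unfolding column_number_def by simp
  then obtain k j where kj: "k \<ge> 1" "j < lam ^ k" "card ((\<lambda>a. subst_pow \<theta> k a ! j) ` UNIV) = 1"
    by auto
  then obtain b where "(\<lambda>a. subst_pow \<theta> k a ! j) ` UNIV = {b}" by (auto simp: card_Suc_eq)
  then have colb: "\<And>a. subst_pow \<theta> k a ! j = b" by blast
  obtain K where K: "K \<ge> 1" "\<forall>a b. b \<in> set (subst_pow \<theta> K a)"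
    using assms(3) unfolding primitive_def by blast
  then obtain i where i: "i < lam ^ K" "subst_pow \<theta> K b ! i = a0"
    using len_pow[OF assms(2)] by (metis in_set_conv_nth)
  let ?u = "fixpt \<theta> a0"
  have u0: "?u 0 = a0" using assms(4) by (simp add: fixpt_def)
  define r where "r m = lam ^ K * (lam ^ k * m + j) + i" for m
  have ur: "?u (r m) = a0" for m
  proof -
    have "?u (lam ^ k * m + j) = b" using fixpt_block[OF assms(2,1,4) kj(2)] colb by simp
    then show ?thesis unfolding r_def using fixpt_block[OF assms(2,1,4) i(1)] i(2) by simp
  qed
  have rpos: "r m \<ge> 1" if "m \<ge> 1" for m
  proof -
    have a: "lam ^ K \<ge> 1" "lam ^ k \<ge> 1" using assms(1) by simp_all
    have "1 * 1 \<le> lam ^ k * m" by (rule mult_le_mono[OF a(2) that])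
    then have b: "1 \<le> lam ^ k * m + j" by linarith
    have "1 * 1 \<le> lam ^ K * (lam ^ k * m + j)" by (rule mult_le_mono[OF a(1) b])
    then have "lam ^ K * (lam ^ k * m + j) \<ge> 1" by simp
    then show ?thesis unfolding r_def by linarith
  qed
  define g0 where "g0 = Gcd {r. r \<ge> 1 \<and> ?u r = ?u 0}"
  have gd: "g0 dvd r m" if "m \<ge> 1" for m
  proof -
    have mem: "r m \<in> {r. r \<ge> 1 \<and> ?u r = ?u 0}" using ur[of m] u0 rpos[OF that] by simp
    have "Gcd {r. r \<ge> 1 \<and> ?u r = ?u 0} dvd r m" using Gcd_dvd[OF mem] .
    then show ?thesis by (simp only: g0_def)
  qed
  have "r 2 - r 1 = lam ^ K * lam ^ k" unfolding r_def by (simp add: algebra_simps)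
  then have gl: "g0 dvd lam ^ (K + k)"
    using dvd_diff_nat[OF gd[of 2] gd[of 1]] by (simp add: power_add)
  have P: "m = 1" if "m \<ge> 1" "coprime m lam" "m dvd g0" for m
  proof -
    have "m dvd lam ^ (K + k)" using that(3) gl by (rule dvd_trans)
    moreover have "coprime m (lam ^ (K + k))" using that(2) by simp
    ultimately show ?thesis using coprime_common_divisor[of m "lam ^ (K + k)" m] by simp
  qed
  have "(GREATEST m. m \<ge> 1 \<and> coprime m lam \<and> m dvd g0) = 1"
  proof (rule Greatest_equality)
    show "1 \<ge> (1::nat) \<and> coprime 1 lam \<and> 1 dvd g0" by simp
  next
    fix y assume "y \<ge> 1 \<and> coprime y lam \<and> y dvd g0"
    then have "y = 1" using P by blast
    then show "y \<le> 1" by simp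
  qed
  then show ?thesis unfolding height_def Let_def g0_def .
qed

end
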